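(* For every normal-form term $E$ (in $\eta$-long form) and every ground type $t$: $\cdot\vdash E : t$ (declarative typing in the empty environment) holds if and only if $\cdot\vdash E\Leftarrow t$ (concrete algorithmic checking in the empty environment) holds.
   Context: Fix a set of type constructors, each with a fixed arity, and an infinite set of type variables. Base types are $B ::= \tau \mid C\,B_1\ldots B_k$; ground base types $b$ contain no type variables. Types are $T ::= B\mid B\to T$; ground types $t ::= b \mid b\to t$. A polytype is $\forall\tau_1\ldots\tau_n.T$. A component library $\Lambda$ is a finite map from component names $c$ to polytypes; the arity of $c$ is the number of arrows in $\Lambda(c)$. Substitutions $\sigma$ map type variables to base types (identity elsewhere). A bottom type $\bot$ is added; $\mathbf{B}_\bot$ = base types $\cup\{\bot\}$. $T'\sqsubseteq T$ iff $T'=\sigma T$ for some $\sigma$; $\bot\sqsubseteq B$ for all $B$; $\equiv$ is mutual $\sqsubseteq$. The bottom substitution $\sigma_\bot$ sends every type to $\bot$, and every substitution maps $\bot$ to $\bot$. $\mathrm{mgu}$ denotes the most general (simultaneous) unifier of a sequence of pairs of types, which is $\sigma_\bot$ if no proper unifier exists and the identity for the empty sequence. $\mathrm{fresh}(\forall\bar\tau.T)$ renames $\bar\tau$ to fresh variables. Type transformer: if $\mathrm{fresh}(\Lambda(c))=B'_1\to\cdots\to B'_m\to B'$ then $[\![c]\!](B_1,\ldots,B_m)=\sigma B'$ with $\sigma=\mathrm{mgu}(B_1,B'_1;\ldots;B_m,B'_m)$. Terms (in $\eta$-long form): application terms $e ::= x \mid c(e_1,\ldots,e_m)$ with $m$ the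 arity of $c$; normal-form terms $E ::= e\mid \lambda x.E$. A typing environment $\Gamma$ maps variables to ground base types. Declarative typing $\Gamma\vdash E:t$ ($t$ ground): (Var) if $\Gamma(x)=b$ then $\Gamma\vdash x:b$; (App) if $\Lambda(c)=\forall\bar\tau.T$, $\sigma T=b_1\to\cdots\to b_m\to b$ is ground and $\Gamma\vdash e_i:b_i$ for all $i$, then $\Gamma\vdash c(e_1,\ldots,e_m):b$; (Fun) if $\Gamma,x{:}b\vdash E:t$ then $\Gamma\vdash\lambda x.E : b\to t$. Concrete algorithmic inference $\Gamma\vdash e\Rightarrow B$: if $\Gamma(x)=b$ then $\Gamma\vdash x\Rightarrow b$; if $\Gamma\vdash e_i\Rightarrow B_i$ for all $i$ then $\Gamma\vdash c(e_1,\ldots,e_m)\Rightarrow [\![c]\!](B_1,\ldots,B_m)$. Concrete algorithmic checking $\Gamma\vdash E\Leftarrow t$: if $\Gamma,x{:}b\vdash E\Leftarrow t$ then $\Gamma\vdash\lambda x.E\Leftarrow b\to t$; if $\Gamma\vdash e\Rightarrow B$ and $b\sqsubseteq B$ then $\Gamma\vdash e\Leftarrow b$. *)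

theory Defs
  imports Main
begin

datatype ('c, 'v) btype = TVar 'v | TCon 'c "('c, 'v) btype list"

datatype ('c, 'v) ty = TB "('c, 'v) btype" | Arr "('c, 'v) btype" "('c, 'v) ty"

datatype 'a botext = BBot | BTy 'a

fun wf_b :: "('c \<Rightarrow> nat) \<Rightarrow> ('c, 'v) btype \<Rightarrow> bool" where
  "wf_b ar (TVar v) = True"
| "wf_b ar (TCon c Bs) = (length Bs = ar c \<and> (\<forall>B\<in>set Bs. wf_b ar B))"

fun wf_t :: "('c \<Rightarrow> nat) \<Rightarrow> ('c, 'v) ty \<Rightarrow> bool" where
  "wf_t ar (TB B) = wf_b ar B"
| "wf_t ar (Arr B T) = (wf_b ar B \<and> wf_t ar T)"

fun tvars_b :: "('c, 'v) btype \<Rightarrow> 'v set" where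
  "tvars_b (TVar v) = {v}"
| "tvars_b (TCon c Bs) = (\<Union>B\<in>set Bs. tvars_b B)"

fun tvars_t :: "('c, 'v) ty \<Rightarrow> 'v set" where
  "tvars_t (TB B) = tvars_b B"
| "tvars_t (Arr B T) = tvars_b B \<union> tvars_t T"

fun tvars_bot :: "('c, 'v) btype botext \<Rightarrow> 'v set" where
  "tvars_bot BBot = {}"
| "tvars_bot (BTy B) = tvars_b B"

definition ground_b :: "('c, 'v) btype \<Rightarrow> bool" where
  "ground_b B \<longleftrightarrow> tvars_b B = {}"

definition ground_t :: "('c, 'v) ty \<Rightarrow> bool" where
  "ground_t T \<longleftrightarrow> tvars_t T = {}"

fun args_of :: "('c, 'v) ty \<Rightarrow> ('c, 'v) btype list" where
  "args_of (TB B) = []"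
| "args_of (Arr B T) = B # args_of T"

fun res_of :: "('c, 'v) ty \<Rightarrow> ('c, 'v) btype" where
  "res_of (TB B) = B"
| "res_of (Arr B T) = res_of T"

fun subst_b :: "('v \<Rightarrow> ('c, 'v) btype) \<Rightarrow> ('c, 'v) btype \<Rightarrow> ('c, 'v) btype" where
  "subst_b \<sigma> (TVar v) = \<sigma> v"
| "subst_b \<sigma> (TCon c Bs) = TCon c (map (subst_b \<sigma>) Bs)"

fun subst_t :: "('v \<Rightarrow> ('c, 'v) btype) \<Rightarrow> ('c, 'v) ty \<Rightarrow> ('c, 'v) ty" where
  "subst_t \<sigma> (TB B) = TB (subst_b \<sigma> B)"
| "subst_t \<sigma> (Arr B T) = Arr (subst_b \<sigma> B) (subst_t \<sigma> T)"

fun subst_bot :: "('v \<Rightarrow> ('c, 'v) btype) \<Rightarrow> ('c, 'v) btype botext \<Rightarrow> ('c, 'v) btype botext" where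
  "subst_bot \<sigma> BBot = BBot"
| "subst_bot \<sigma> (BTy B) = BTy (subst_b \<sigma> B)"

definition wf_subst :: "('c \<Rightarrow> nat) \<Rightarrow> ('v \<Rightarrow> ('c, 'v) btype) \<Rightarrow> bool" where
  "wf_subst ar \<sigma> \<longleftrightarrow> (\<forall>v. wf_b ar (\<sigma> v))"

definition inst_le :: "('c \<Rightarrow> nat) \<Rightarrow> ('c, 'v) btype botext \<Rightarrow> ('c, 'v) btype botext \<Rightarrow> bool" where
  "inst_le ar X' X \<longleftrightarrow> X' = BBot \<or> (\<exists>\<sigma>. wf_subst ar \<sigma> \<and> X' = subst_bot \<sigma> X)"

definition unifier :: "('c \<Rightarrow> nat) \<Rightarrow> ('v \<Rightarrow> ('c, 'v) btype)
    \<Rightarrow> (('c, 'v) btype botext \<times> ('c, 'v) btype botext) list \<Rightarrow> bool" where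
  "unifier ar \<sigma> ps \<longleftrightarrow> wf_subst ar \<sigma> \<and> (\<forall>(X, Y)\<in>set ps. subst_bot \<sigma> X = subst_bot \<sigma> Y)"

definition is_mgu :: "('c \<Rightarrow> nat) \<Rightarrow> ('v \<Rightarrow> ('c, 'v) btype)
    \<Rightarrow> (('c, 'v) btype botext \<times> ('c, 'v) btype botext) list \<Rightarrow> bool" where
  "is_mgu ar \<sigma> ps \<longleftrightarrow> unifier ar \<sigma> ps \<and>
     (\<forall>\<theta>. unifier ar \<theta> ps \<longrightarrow> (\<exists>\<delta>. wf_subst ar \<delta> \<and> (\<forall>v. \<theta> v = subst_b \<delta> (\<sigma> v))))"

text \<open>transformer ar T Bs R: R is a possible value of [[c]](Bs) when Lambda(c) = forall tvs. T
  (polytypes are closed, so all type variables of T are bound).  fresh renames the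
  bound variables injectively to variables not occurring in the arguments; then
  R = mgu(Bs, B's) B', where mgu is the bottom substitution (giving bottom) if there is
  no proper unifier.  Freshness and the choice of mgu are only determined up to
  renaming; the relation allows any such choice.\<close>
definition transformer :: "('c \<Rightarrow> nat) \<Rightarrow> ('c, 'v) ty \<Rightarrow> ('c, 'v) btype botext list
    \<Rightarrow> ('c, 'v) btype botext \<Rightarrow> bool" where
  "transformer ar T Bs R \<longleftrightarrow>
     (\<exists>\<rho> :: 'v \<Rightarrow> 'v.
        inj_on \<rho> (tvars_t T) \<and> \<rho> ` tvars_t T \<inter> (\<Union>X\<in>set Bs. tvars_bot X) = {} \<and>
        (let T' = subst_t (TVar \<circ> \<rho>) T;
             ps = zip Bs (map BTy (args_of T'))
         in length Bs = length (args_of T') \<and>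
            (if (\<exists>\<sigma>. unifier ar \<sigma> ps)
             then (\<exists>\<sigma>. is_mgu ar \<sigma> ps \<and> R = BTy (subst_b \<sigma> (res_of T')))
             else R = BBot)))"

datatype ('n, 'x) aterm = Var 'x | App 'n "('n, 'x) aterm list"
datatype ('n, 'x) nterm = Atm "('n, 'x) aterm" | Lam 'x "('n, 'x) nterm"

type_synonym ('n, 'c, 'v) library = "'n \<Rightarrow> ('c, 'v) ty option"
type_synonym ('x, 'c, 'v) env = "'x \<Rightarrow> ('c, 'v) btype option"

inductive decl_a :: "('c \<Rightarrow> nat) \<Rightarrow> ('n, 'c, 'v) library \<Rightarrow> ('x, 'c, 'v) env
    \<Rightarrow> ('n, 'x) aterm \<Rightarrow> ('c, 'v) btype \<Rightarrow> bool"
  for ar \<Lambda> where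
  decl_var: "\<Gamma> x = Some b \<Longrightarrow> decl_a ar \<Lambda> \<Gamma> (Var x) b"
| decl_app: "\<Lambda> c = Some T \<Longrightarrow> wf_subst ar \<sigma> \<Longrightarrow> ground_t (subst_t \<sigma> T) \<Longrightarrow>
    subst_t \<sigma> T = T0 \<Longrightarrow> list_all2 (decl_a ar \<Lambda> \<Gamma>) es (args_of T0) \<Longrightarrow>
    decl_a ar \<Lambda> \<Gamma> (App c es) (res_of T0)"

inductive decl_n :: "('c \<Rightarrow> nat) \<Rightarrow> ('n, 'c, 'v) library \<Rightarrow> ('x, 'c, 'v) env
    \<Rightarrow> ('n, 'x) nterm \<Rightarrow> ('c, 'v) ty \<Rightarrow> bool"
  for ar \<Lambda> where
  decl_atm: "decl_a ar \<Lambda> \<Gamma> e b \<Longrightarrow> decl_n ar \<Lambda> \<Gamma> (Atm e) (TB b)"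
| decl_fun: "ground_b b \<Longrightarrow> decl_n ar \<Lambda> (\<Gamma>(x \<mapsto> b)) E t \<Longrightarrow> decl_n ar \<Lambda> \<Gamma> (Lam x E) (Arr b t)"

inductive infer :: "('c \<Rightarrow> nat) \<Rightarrow> ('n, 'c, 'v) library \<Rightarrow> ('x, 'c, 'v) env
    \<Rightarrow> ('n, 'x) aterm \<Rightarrow> ('c, 'v) btype botext \<Rightarrow> bool"
  for ar \<Lambda> where
  infer_var: "\<Gamma> x = Some b \<Longrightarrow> infer ar \<Lambda> \<Gamma> (Var x) (BTy b)"
| infer_app: "\<Lambda> c = Some T \<Longrightarrow> list_all2 (infer ar \<Lambda> \<Gamma>) es Bs \<Longrightarrow>
    transformer ar T Bs R \<Longrightarrow> infer ar \<Lambda> \<Gamma> (App c es) R"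

inductive check :: "('c \<Rightarrow> nat) \<Rightarrow> ('n, 'c, 'v) library \<Rightarrow> ('x, 'c, 'v) env
    \<Rightarrow> ('n, 'x) nterm \<Rightarrow> ('c, 'v) ty \<Rightarrow> bool"
  for ar \<Lambda> where
  check_fun: "ground_b b \<Longrightarrow> check ar \<Lambda> (\<Gamma>(x \<mapsto> b)) E t \<Longrightarrow> check ar \<Lambda> \<Gamma> (Lam x E) (Arr b t)"
| check_atm: "ground_b b \<Longrightarrow> infer ar \<Lambda> \<Gamma> e B \<Longrightarrow> inst_le ar (BTy b) B \<Longrightarrow>
    check ar \<Lambda> \<Gamma> (Atm e) (TB b)"

end

theory Submission
  imports Defs
begin


lemma subst_b_comp: "subst_b \<theta> (subst_b \<sigma> B) = subst_b (\<lambda>u. subst_b \<theta> (\<sigma> u)) B"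
  by (induction B) auto

lemma subst_t_comp: "subst_t \<theta> (subst_t \<sigma> T) = subst_t (\<lambda>u. subst_b \<theta> (\<sigma> u)) T"
  by (induction T) (auto simp: subst_b_comp)

lemma subst_b_cong: "(\<And>u. u \<in> tvars_b B \<Longrightarrow> \<theta> u = \<theta>' u) \<Longrightarrow> subst_b \<theta> B = subst_b \<theta>' B"
  by (induction B) auto

lemma subst_b_TVar[simp]: "subst_b TVar B = B"
  by (induction B) (auto simp: map_idI)

lemma subst_b_id: "(\<And>u. u \<in> tvars_b B \<Longrightarrow> \<theta> u = TVar u) \<Longrightarrow> subst_b \<theta> B = B"
  using subst_b_cong[of B \<theta> TVar] by simp

lemma tvars_subst_b: "tvars_b (subst_b \<sigma> B) = (\<Union>u\<in>tvars_b B. tvars_b (\<sigma> u))"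
  by (induction B) auto

lemma tvars_subst_t: "tvars_t (subst_t \<sigma> T) = (\<Union>u\<in>tvars_t T. tvars_b (\<sigma> u))"
  by (induction T) (auto simp: tvars_subst_b)

lemma args_subst[simp]: "args_of (subst_t \<sigma> T) = map (subst_b \<sigma>) (args_of T)"
  by (induction T) auto

lemma res_subst[simp]: "res_of (subst_t \<sigma> T) = subst_b \<sigma> (res_of T)"
  by (induction T) auto

lemma tvars_t_args_res: "tvars_t T = (\<Union>B\<in>set (args_of T). tvars_b B) \<union> tvars_b (res_of T)"
  by (induction T) auto

lemma wf_subst_b: "wf_subst ar \<sigma> \<Longrightarrow> wf_b ar B \<Longrightarrow> wf_b ar (subst_b \<sigma> B)"
  by (induction B) (auto simp: wf_subst_def)

lemma wf_subst_t: "wf_subst ar \<sigma> \<Longrightarrow> wf_t ar T \<Longrightarrow> wf_t ar (subst_t \<sigma> T)"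
  by (induction T) (auto simp: wf_subst_b)

lemma wf_subst_b_rev: "wf_b ar (subst_b \<sigma> B) \<Longrightarrow> wf_b ar B"
  by (induction B) auto

lemma wf_res: "wf_t ar T \<Longrightarrow> wf_b ar (res_of T)"
  by (induction T) auto

lemma ground_subst_b: "(\<And>u. ground_b (\<theta> u)) \<Longrightarrow> ground_b (subst_b \<theta> B)"
  by (simp add: ground_b_def tvars_subst_b)

lemma ground_subst_t: "(\<And>u. ground_b (\<theta> u)) \<Longrightarrow> ground_t (subst_t \<theta> T)"
  by (simp add: ground_b_def ground_t_def tvars_subst_t)

lemma ground_subst_id: "ground_b B \<Longrightarrow> subst_b \<theta> B = B"
  by (rule subst_b_id) (auto simp: ground_b_def)

section \<open>Unification\<close>

fun sz :: "('c,'v) btype \<Rightarrow> nat" where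
  "sz (TVar v) = 1"
| "sz (TCon c Bs) = 2 + sum_list (map sz Bs)"

definition szl :: "(('c,'v) btype \<times> ('c,'v) btype) list \<Rightarrow> nat" where
  "szl ps = sum_list (map (\<lambda>(X,Y). 2 * sz X + sz Y) ps)"

definition unif :: "('v \<Rightarrow> ('c,'v) btype) \<Rightarrow> (('c,'v) btype \<times> ('c,'v) btype) list \<Rightarrow> bool" where
  "unif \<theta> ps \<longleftrightarrow> (\<forall>(X,Y)\<in>set ps. subst_b \<theta> X = subst_b \<theta> Y)"

definition vars_ps :: "(('c,'v) btype \<times> ('c,'v) btype) list \<Rightarrow> 'v set" where
  "vars_ps ps = (\<Union>(X,Y)\<in>set ps. tvars_b X \<union> tvars_b Y)"

lemma finite_tvars_b[simp]: "finite (tvars_b B)"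
  by (induction B) auto

lemma finite_vars_ps[simp]: "finite (vars_ps ps)"
  by (auto simp: vars_ps_def)

lemma sz_pos: "sz B \<ge> 1"
  by (cases B) auto

lemma sz_le: "v \<in> tvars_b Y \<Longrightarrow> sz (\<theta> v) \<le> sz (subst_b \<theta> Y)"
proof (induction Y)
  case (TVar x)
  then show ?case by simp
next
  case (TCon c Ys)
  then obtain Y where Y: "Y \<in> set Ys" "v \<in> tvars_b Y" by auto
  have "sz (\<theta> v) \<le> sz (subst_b \<theta> Y)" using TCon Y by blast
  also have "\<dots> \<le> sum_list (map sz (map (subst_b \<theta>) Ys))"
    using Y(1) by (intro member_le_sum_list) auto
  finally show ?case by simp
qed

lemma occurs: "v \<in> tvars_b Y \<Longrightarrow> Y \<noteq> TVar v \<Longrightarrow> subst_b \<theta> Y \<noteq> \<theta> v"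
proof (cases Y)
  case (TVar x)
  then show "v \<in> tvars_b Y \<Longrightarrow> Y \<noteq> TVar v \<Longrightarrow> subst_b \<theta> Y \<noteq> \<theta> v" by simp
next
  case (TCon c Ys)
  assume "v \<in> tvars_b Y"
  then obtain Z where Z: "Z \<in> set Ys" "v \<in> tvars_b Z" using TCon by auto
  have "sz (\<theta> v) \<le> sz (subst_b \<theta> Z)" using sz_le Z(2) .
  also have "\<dots> \<le> sum_list (map sz (map (subst_b \<theta>) Ys))"
    using Z(1) by (intro member_le_sum_list) auto
  finally have "sz (\<theta> v) < sz (subst_b \<theta> Y)" using TCon by simp
  then show ?thesis by auto
qed



lemma unif_Cons[simp]: "unif \<theta> ((X,Y)#ps) \<longleftrightarrow> subst_b \<theta> X = subst_b \<theta> Y \<and> unif \<theta> ps"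
  by (simp add: unif_def)

lemma vars_Cons[simp]: "vars_ps ((X,Y)#ps) = tvars_b X \<union> tvars_b Y \<union> vars_ps ps"
  by (auto simp: vars_ps_def)

lemma szl_Cons[simp]: "szl ((X,Y)#ps) = 2 * sz X + sz Y + szl ps"
  by (simp add: szl_def)

lemma sz_gt0[simp]: "0 < sz B" by (cases B) auto

lemma unif_Nil[simp]: "unif \<theta> []" by (simp add: unif_def)
lemma vars_Nil[simp]: "vars_ps [] = {}" by (simp add: vars_ps_def)
lemma szl_Nil[simp]: "szl [] = 0" by (simp add: szl_def)

lemma unif_append[simp]: "unif \<theta> (ps @ qs) \<longleftrightarrow> unif \<theta> ps \<and> unif \<theta> qs"
  by (auto simp: unif_def)

lemma vars_append[simp]: "vars_ps (ps @ qs) = vars_ps ps \<union> vars_ps qs"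
  by (auto simp: vars_ps_def)

lemma szl_append[simp]: "szl (ps @ qs) = szl ps + szl qs"
  by (simp add: szl_def)

lemma unif_zip: "length As = length Bs \<Longrightarrow>
   unif \<theta> (zip As Bs) \<longleftrightarrow> map (subst_b \<theta>) As = map (subst_b \<theta>) Bs"
  by (induction As Bs rule: list_induct2) auto

lemma vars_zip: "length As = length Bs \<Longrightarrow>
   vars_ps (zip As Bs) = (\<Union>A\<in>set As. tvars_b A) \<union> (\<Union>B\<in>set Bs. tvars_b B)"
  by (induction As Bs rule: list_induct2) auto

lemma szl_zip: "length As = length Bs \<Longrightarrow>
   szl (zip As Bs) = 2 * sum_list (map sz As) + sum_list (map sz Bs)"
  by (induction As Bs rule: list_induct2) auto

definition Rm :: "((('c,'v) btype \<times> ('c,'v) btype) list \<times> (('c,'v) btype \<times> ('c,'v) btype) list) set" where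
  "Rm = inv_image (less_than <*lex*> less_than) (\<lambda>ps. (card (vars_ps ps), szl ps))"

lemma wfR: "wf Rm" unfolding Rm_def by (intro wf_inv_image wf_lex_prod wf_less_than)

lemma R_I: "vars_ps a \<subseteq> vars_ps b \<Longrightarrow> szl a < szl b \<Longrightarrow> (a, b) \<in> Rm"
proof -
  assume a: "vars_ps a \<subseteq> vars_ps b" "szl a < szl b"
  have "card (vars_ps a) \<le> card (vars_ps b)" by (rule card_mono[OF finite_vars_ps a(1)])
  then show ?thesis using a(2) unfolding Rm_def by auto
qed

lemma R_I2: "vars_ps a \<subset> vars_ps b \<Longrightarrow> (a, b) \<in> Rm"
proof -
  assume a: "vars_ps a \<subset> vars_ps b"
  have "card (vars_ps a) < card (vars_ps b)" by (rule psubset_card_mono[OF finite_vars_ps a])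
  then show ?thesis unfolding Rm_def by auto
qed

definition mgu_prop where
  "mgu_prop \<sigma> ps \<longleftrightarrow> unif \<sigma> ps \<and> (\<forall>\<theta>. unif \<theta> ps \<longrightarrow> (\<forall>u. subst_b \<theta> (\<sigma> u) = \<theta> u))
     \<and> (\<forall>u. tvars_b (\<sigma> u) \<subseteq> vars_ps ps \<union> {u})"

lemma mgu_var:
  assumes IH: "\<And>qs \<theta>. (qs, (TVar v, Y) # rest) \<in> Rm \<Longrightarrow> unif \<theta> qs \<Longrightarrow> \<exists>\<sigma>. mgu_prop \<sigma> qs"
    and u: "unif \<theta> ((TVar v, Y) # rest)" and ne: "Y \<noteq> TVar v"
  shows "\<exists>\<sigma>. mgu_prop \<sigma> ((TVar v, Y) # rest)"
proof -
  let ?ps = "(TVar v, Y) # rest"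
  have tv: "\<theta> v = subst_b \<theta> Y" using u by simp
  have nv: "v \<notin> tvars_b Y" using occurs[OF _ ne, of \<theta>] tv by metis
  define \<tau> where "\<tau> = TVar(v := Y)"
  define rest' where "rest' = map (\<lambda>(A,B). (subst_b \<tau> A, subst_b \<tau> B)) rest"
  have comp: "subst_b \<theta>' (subst_b \<tau> A) = subst_b \<theta>' A" if "\<theta>' v = subst_b \<theta>' Y" for \<theta>' A
    unfolding subst_b_comp by (rule subst_b_cong) (auto simp: \<tau>_def that)
  have unif_rest': "unif \<theta>' rest'" if "unif \<theta>' ?ps" for \<theta>'
  proof -
    have "\<theta>' v = subst_b \<theta>' Y" using that by simp
    then show ?thesis using that by (auto simp: unif_def rest'_def comp)
  qed
  have tvt: "tvars_b (subst_b \<tau> A) \<subseteq> (tvars_b A - {v}) \<union> tvars_b Y" for A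
    by (auto simp: tvars_subst_b \<tau>_def split: if_splits)
  have "vars_ps rest' \<subseteq> vars_ps ?ps - {v}"
    using tvt nv by (fastforce simp: vars_ps_def rest'_def)
  then have "vars_ps rest' \<subset> vars_ps ?ps" by auto
  then have "(rest', ?ps) \<in> Rm" by (rule R_I2)
  then obtain \<sigma>' where s': "mgu_prop \<sigma>' rest'" using IH unif_rest'[OF u] by blast
  define \<sigma> where "\<sigma> = (\<lambda>u. subst_b \<sigma>' (\<tau> u))"
  have s\<sigma>: "subst_b \<sigma> A = subst_b \<sigma>' (subst_b \<tau> A)" for A
    by (simp add: subst_b_comp \<sigma>_def)
  have \<tau>Y: "subst_b \<tau> Y = Y" using nv by (intro subst_b_id) (auto simp: \<tau>_def)
  have "unif \<sigma> ?ps"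
  proof -
    have "subst_b \<sigma> (TVar v) = subst_b \<sigma> Y" by (simp add: s\<sigma> \<tau>Y) (simp add: \<sigma>_def \<tau>_def)
    moreover have "unif \<sigma> rest" using s' unfolding mgu_prop_def
      by (auto simp: unif_def rest'_def s\<sigma>)
    ultimately show ?thesis by simp
  qed
  moreover have "\<forall>\<theta>'. unif \<theta>' ?ps \<longrightarrow> (\<forall>u. subst_b \<theta>' (\<sigma> u) = \<theta>' u)"
  proof (intro allI impI)
    fix \<theta>' u assume a: "unif \<theta>' ?ps"
    have e: "\<forall>w. subst_b \<theta>' (\<sigma>' w) = \<theta>' w" using s' unif_rest'[OF a] by (simp add: mgu_prop_def)
    have "subst_b \<theta>' (\<sigma> u) = subst_b \<theta>' (\<tau> u)"
      by (simp add: \<sigma>_def subst_b_comp e)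
    also have "\<dots> = \<theta>' u" using a by (auto simp: \<tau>_def)
    finally show "subst_b \<theta>' (\<sigma> u) = \<theta>' u" .
  qed
  moreover have "\<forall>u. tvars_b (\<sigma> u) \<subseteq> vars_ps ?ps \<union> {u}"
  proof
    fix u
    have "tvars_b (\<sigma> u) = (\<Union>w\<in>tvars_b (\<tau> u). tvars_b (\<sigma>' w))"
      by (simp add: \<sigma>_def tvars_subst_b)
    also have "\<dots> \<subseteq> (\<Union>w\<in>tvars_b (\<tau> u). vars_ps rest' \<union> {w})"
      using s' unfolding mgu_prop_def by blast
    also have "\<dots> \<subseteq> vars_ps ?ps \<union> {u}"
      using \<open>vars_ps rest' \<subseteq> vars_ps ?ps - {v}\<close> by (auto simp: \<tau>_def split: if_splits)
    finally show "tvars_b (\<sigma> u) \<subseteq> vars_ps ?ps \<union> {u}" .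
  qed
  ultimately show ?thesis unfolding mgu_prop_def by blast
qed

lemma mgu_exists: "unif \<theta> ps \<Longrightarrow> \<exists>\<sigma>. mgu_prop \<sigma> ps"
proof (induction ps arbitrary: \<theta> rule: wf_induct_rule[OF wfR])
  case (1 ps)
  note IH = 1(1)
  have u: "unif \<theta> ps" by (rule 1(2))
  show ?case
  proof (cases ps)
    case Nil
    then have "mgu_prop TVar ps" by (simp add: mgu_prop_def)
    then show ?thesis by blast
  next
    case (Cons p rest)
    obtain X Y where p: "p = (X, Y)" by fastforce
    have ps: "ps = (X,Y) # rest" using Cons p by simp
    show ?thesis
    proof (cases "X = Y")
      case True
      have "(rest, ps) \<in> Rm" unfolding ps by (intro R_I) (auto simp: sz_pos)
      moreover have "unif \<theta> rest" using u ps by simp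
      ultimately obtain \<sigma> where "mgu_prop \<sigma> rest" using IH by blast
      then have "mgu_prop \<sigma> ps" unfolding ps mgu_prop_def using True by auto
      then show ?thesis by blast
    next
      case False
      show ?thesis
      proof (cases X)
        case (TVar v)
        have "\<exists>\<sigma>. mgu_prop \<sigma> ((TVar v, Y) # rest)"
        proof (rule mgu_var)
          show "unif \<theta> ((TVar v, Y) # rest)" using u ps \<open>X = TVar v\<close> by simp
          show "Y \<noteq> TVar v" using False \<open>X = TVar v\<close> by simp
          show "\<exists>\<sigma>. mgu_prop \<sigma> qs" if "(qs, (TVar v, Y) # rest) \<in> Rm" "unif \<theta>' qs" for qs \<theta>'
            using IH that ps \<open>X = TVar v\<close> by blast
        qed
        then show ?thesis using ps \<open>X = TVar v\<close> by simp
      next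
        case (TCon c As)
        show ?thesis
        proof (cases Y)
          case (TVar v)
          let ?qs = "(TVar v, X) # rest"
          have "(?qs, ps) \<in> Rm" unfolding ps TVar TCon
            by (intro R_I) (auto simp: sz_pos)
          moreover have "unif \<theta> ?qs" using u ps \<open>Y = TVar v\<close> by auto
          ultimately obtain \<sigma> where m: "mgu_prop \<sigma> ?qs"
            using IH by blast
          have "unif \<sigma>' ?qs \<longleftrightarrow> unif \<sigma>' ps" for \<sigma>' using ps \<open>Y = TVar v\<close> by auto
          moreover have "vars_ps ?qs = vars_ps ps" using ps \<open>Y = TVar v\<close> by auto
          ultimately have "mgu_prop \<sigma> ps" using m unfolding mgu_prop_def by simp
          then show ?thesis by blast
        next
          case (TCon d Bs)
          have "subst_b \<theta> X = subst_b \<theta> Y" using u ps by simp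
          then have eq: "c = d" "map (subst_b \<theta>) As = map (subst_b \<theta>) Bs"
            using \<open>X = TCon c As\<close> TCon by auto
          then have len: "length As = length Bs" by (metis length_map)
          let ?qs = "zip As Bs @ rest"
          have vq: "vars_ps ?qs = vars_ps ps" unfolding ps \<open>X = TCon c As\<close> TCon using len
            by (auto simp: vars_zip)
          have "szl ?qs < szl ps" unfolding ps \<open>X = TCon c As\<close> TCon using len
            by (simp add: szl_zip)
          then have "(?qs, ps) \<in> Rm" using vq by (intro R_I) auto
          moreover have "unif \<theta> ?qs" using u ps eq len by (simp add: unif_zip)
          ultimately obtain \<sigma> where m: "mgu_prop \<sigma> ?qs" using IH by blast
          have "unif \<sigma>' ?qs \<longleftrightarrow> unif \<sigma>' ps" for \<sigma>'
            unfolding ps \<open>X = TCon c As\<close> TCon using len eq(1) by (simp add: unif_zip)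
          then have "mgu_prop \<sigma> ps" using m vq unfolding mgu_prop_def by simp
          then show ?thesis by blast
        qed
      qed
    qed
  qed
qed



lemma subst_t_cong: "(\<And>u. u \<in> tvars_t T \<Longrightarrow> \<theta> u = \<theta>' u) \<Longrightarrow> subst_t \<theta> T = subst_t \<theta>' T"
  by (induction T) (auto intro: subst_b_cong)

lemma finite_tvars_t[simp]: "finite (tvars_t T)"
  by (induction T) auto

lemma fresh_ren:
  assumes inf: "infinite (UNIV :: 'v set)"
  shows "finite A \<Longrightarrow> finite F \<Longrightarrow> \<exists>\<rho>::'v\<Rightarrow>'v. inj_on \<rho> A \<and> \<rho> ` A \<inter> F = {}"
proof (induction A rule: finite_induct)
  case empty
  then show ?case by simp
next
  case (insert a A)
  have "\<exists>\<rho>::'v\<Rightarrow>'v. inj_on \<rho> A \<and> \<rho> ` A \<inter> F = {}" by (rule insert.IH[OF insert.prems])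
  then obtain \<rho> :: "'v \<Rightarrow> 'v" where r: "inj_on \<rho> A" "\<rho> ` A \<inter> F = {}" by blast
  have fin: "finite (F \<union> \<rho> ` A)" using insert.prems insert.hyps(1) by simp
  obtain w where w: "w \<notin> F \<union> \<rho> ` A" using ex_new_if_finite[OF inf fin] by blast
  have "inj_on (\<rho>(a := w)) A" using r(1) w by (intro inj_on_fun_updI) auto
  moreover have "w \<notin> (\<rho>(a := w)) ` A" using w insert.hyps(2) by auto
  moreover have "A - {a} = A" using insert.hyps(2) by blast
  ultimately have "inj_on (\<rho>(a := w)) (insert a A)"
    by (simp only: inj_on_insert fun_upd_same) simp
  moreover have "(\<rho>(a := w)) ` insert a A \<inter> F = {}" using r w insert.hyps(2) by auto
  ultimately show ?case by blast
qed

lemma unifier_zip: "length xs = length ys \<Longrightarrow>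
  unifier ar \<sigma> (zip (map BTy xs) (map BTy ys)) \<longleftrightarrow> wf_subst ar \<sigma> \<and> unif \<sigma> (zip xs ys)"
  by (induction xs ys rule: list_induct2) (auto simp: unifier_def)

lemma wf_subst_TVar[simp]: "wf_subst ar TVar" by (simp add: wf_subst_def)

definition gr_env :: "('x, 'c, 'v) env \<Rightarrow> bool" where
  "gr_env \<Gamma> \<longleftrightarrow> (\<forall>x b. \<Gamma> x = Some b \<longrightarrow> ground_b b)"

definition CP where
  "CP ar \<Lambda> \<Gamma> e b \<longleftrightarrow> (\<forall>F. finite F \<longrightarrow> (\<exists>B \<theta>. infer ar \<Lambda> \<Gamma> e (BTy B) \<and> tvars_b B \<inter> F = {}
      \<and> wf_subst ar \<theta> \<and> b = subst_b \<theta> B))"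

lemma compl_list:
  "list_all2 (CP ar \<Lambda> \<Gamma>) es bs \<Longrightarrow> finite F \<Longrightarrow> wf_subst ar \<sigma>0 \<Longrightarrow>
   \<exists>Bs \<theta>. list_all2 (infer ar \<Lambda> \<Gamma>) es (map BTy Bs) \<and> (\<forall>B\<in>set Bs. tvars_b B \<inter> F = {})
     \<and> wf_subst ar \<theta> \<and> bs = map (subst_b \<theta>) Bs \<and> (\<forall>u\<in>F. \<theta> u = \<sigma>0 u)"
proof (induction es bs arbitrary: F \<sigma>0 rule: list_all2_induct)
  case Nil
  then show ?case by (intro exI[of _ "[]"] exI[of _ \<sigma>0]) auto
next
  case (Cons e es b bs)
  have "\<exists>B \<theta>. infer ar \<Lambda> \<Gamma> e (BTy B) \<and> tvars_b B \<inter> F = {}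
      \<and> wf_subst ar \<theta> \<and> b = subst_b \<theta> B" using Cons.hyps(1) Cons.prems(1) unfolding CP_def by simp
  then obtain B1 \<theta>1 where h: "infer ar \<Lambda> \<Gamma> e (BTy B1)" "tvars_b B1 \<inter> F = {}" "wf_subst ar \<theta>1"
    "b = subst_b \<theta>1 B1" by auto
  define \<theta>' where "\<theta>' = (\<lambda>u. if u \<in> tvars_b B1 then \<theta>1 u else \<sigma>0 u)"
  have w': "wf_subst ar \<theta>'" using h(3) Cons.prems(2) by (auto simp: wf_subst_def \<theta>'_def)
  have fU: "finite (F \<union> tvars_b B1)" using Cons.prems(1) by simp
  have "\<exists>Bs \<theta>. list_all2 (infer ar \<Lambda> \<Gamma>) es (map BTy Bs) \<and>
    (\<forall>B\<in>set Bs. tvars_b B \<inter> (F \<union> tvars_b B1) = {}) \<and> wf_subst ar \<theta> \<and> bs = map (subst_b \<theta>) Bs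
    \<and> (\<forall>u\<in>F \<union> tvars_b B1. \<theta> u = \<theta>' u)" by (rule Cons.IH[OF fU w'])
  then obtain Bs \<theta> where r: "list_all2 (infer ar \<Lambda> \<Gamma>) es (map BTy Bs)"
    "\<forall>B\<in>set Bs. tvars_b B \<inter> (F \<union> tvars_b B1) = {}" "wf_subst ar \<theta>" "bs = map (subst_b \<theta>) Bs"
    "\<forall>u\<in>F \<union> tvars_b B1. \<theta> u = \<theta>' u"
    by auto
  have e1: "subst_b \<theta> B1 = subst_b \<theta>1 B1"
    using r(5) by (intro subst_b_cong) (auto simp: \<theta>'_def)
  have a1: "list_all2 (infer ar \<Lambda> \<Gamma>) (e # es) (map BTy (B1 # Bs))" using h(1) r(1) by simp
  have a2: "\<forall>B\<in>set (B1 # Bs). tvars_b B \<inter> F = {}" using h(2) r(2) by auto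
  have a3: "b # bs = map (subst_b \<theta>) (B1 # Bs)" using e1 h(4) r(4) by simp
  have a4: "\<forall>u\<in>F. \<theta> u = \<sigma>0 u"
  proof
    fix u assume "u \<in> F"
    then have "\<theta> u = \<theta>' u" "u \<notin> tvars_b B1" using r(5) h(2) by auto
    then show "\<theta> u = \<sigma>0 u" by (simp add: \<theta>'_def)
  qed
  show ?case
    by (rule exI[of _ "B1 # Bs"], rule exI[of _ \<theta>]) (intro conjI a1 a2 r(3) a3 a4)
qed




lemma tvars_res_sub: "tvars_b (res_of T) \<subseteq> tvars_t T"
  by (induction T) auto

lemma compl_a:
  assumes inf: "infinite (UNIV :: 'v set)"
  shows "decl_a ar \<Lambda> \<Gamma> e b \<Longrightarrow> gr_env \<Gamma> \<Longrightarrow> CP ar \<Lambda> (\<Gamma> :: ('x,'c,'v) env) e b"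
proof (induction rule: decl_a.induct)
  case (decl_var \<Gamma> x b)
  have "infer ar \<Lambda> \<Gamma> (Var x) (BTy b)" using decl_var(1) by (rule infer_var)
  moreover have "tvars_b b = {}" using decl_var by (auto simp: gr_env_def ground_b_def)
  ultimately show ?case unfolding CP_def
    by (intro allI impI exI[of _ b] exI[of _ TVar]) auto
next
  case (decl_app c T \<sigma> T0 \<Gamma> es)
  show ?case unfolding CP_def
  proof (intro allI impI)
    fix F :: "'v set" assume fF: "finite F"
    have l2: "list_all2 (CP ar \<Lambda> \<Gamma>) es (args_of T0)"
      using decl_app.IH decl_app.prems by (simp add: list_all2_conv_all_nth)
    obtain Bs \<theta> where r: "list_all2 (infer ar \<Lambda> \<Gamma>) es (map BTy Bs)" "\<forall>B\<in>set Bs. tvars_b B \<inter> F = {}"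
      "wf_subst ar \<theta>" "args_of T0 = map (subst_b \<theta>) Bs"
      using compl_list[OF l2 fF wf_subst_TVar] by blast
    define V where "V = F \<union> (\<Union>B\<in>set Bs. tvars_b B)"
    have fV: "finite V" using fF by (simp add: V_def)
    obtain \<rho> :: "'v \<Rightarrow> 'v" where \<rho>: "inj_on \<rho> (tvars_t T)" "\<rho> ` tvars_t T \<inter> V = {}"
      using fresh_ren[OF inf finite_tvars_t fV] by blast
    define T' where "T' = subst_t (TVar \<circ> \<rho>) T"
    define \<theta>'' where "\<theta>'' = (\<lambda>u. if u \<in> \<rho> ` tvars_t T then \<sigma> (inv_into (tvars_t T) \<rho> u) else \<theta> u)"
    have w'': "wf_subst ar \<theta>''" using r(3) decl_app.hyps(2) by (auto simp: wf_subst_def \<theta>''_def)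
    have tT': "tvars_t T' = \<rho> ` tvars_t T" by (auto simp: T'_def tvars_subst_t)
    have sT': "subst_t \<theta>'' T' = T0"
    proof -
      have "subst_t \<theta>'' T' = subst_t (\<lambda>u. \<theta>'' (\<rho> u)) T" by (simp add: T'_def subst_t_comp)
      also have "\<dots> = subst_t \<sigma> T"
        by (rule subst_t_cong) (simp add: \<theta>''_def inv_into_f_f[OF \<rho>(1)])
      finally show ?thesis using decl_app.hyps(4) by simp
    qed
    have sBs: "map (subst_b \<theta>'') Bs = map (subst_b \<theta>) Bs"
    proof (rule map_cong[OF refl], rule subst_b_cong)
      fix B u assume "B \<in> set Bs" "u \<in> tvars_b B"
      then have "u \<notin> \<rho> ` tvars_t T" using \<rho>(2) by (auto simp: V_def)
      then show "\<theta>'' u = \<theta> u" by (simp add: \<theta>''_def)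
    qed
    have len: "length Bs = length (args_of T')"
    proof -
      have "length Bs = length (args_of T0)" using r(4) by simp
      also have "\<dots> = length (args_of T')" using sT' by (metis args_subst length_map)
      finally show ?thesis .
    qed
    have "map (subst_b \<theta>'') Bs = map (subst_b \<theta>'') (args_of T')"
      using sBs r(4) sT' by (metis args_subst)
    then have u'': "unif \<theta>'' (zip Bs (args_of T'))" using len by (simp add: unif_zip)
    obtain \<sigma>s where m: "mgu_prop \<sigma>s (zip Bs (args_of T'))" using mgu_exists[OF u''] by blast
    have fix'': "subst_b \<theta>'' (\<sigma>s u) = \<theta>'' u" for u using m u'' by (simp add: mgu_prop_def)
    have wfs: "wf_subst ar \<sigma>s"
      unfolding wf_subst_def
    proof
      fix u show "wf_b ar (\<sigma>s u)"
        using w'' fix''[of u] by (metis wf_subst_def wf_subst_b_rev)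
    qed
    define ps where "ps = zip (map BTy Bs) (map BTy (args_of T'))"
    define Bres where "Bres = subst_b \<sigma>s (res_of T')"
    have unifps: "unifier ar \<theta>'' ps" using u'' w'' len by (simp add: ps_def unifier_zip)
    have mgups: "is_mgu ar \<sigma>s ps"
      unfolding is_mgu_def
    proof (intro conjI allI impI)
      show "unifier ar \<sigma>s ps" using m wfs len by (simp add: ps_def unifier_zip mgu_prop_def)
      fix \<theta>1 assume "unifier ar \<theta>1 ps"
      then have "wf_subst ar \<theta>1" "unif \<theta>1 (zip Bs (args_of T'))" using len by (simp_all add: ps_def unifier_zip)
      then show "\<exists>\<delta>. wf_subst ar \<delta> \<and> (\<forall>v. \<theta>1 v = subst_b \<delta> (\<sigma>s v))"
        using m by (intro exI[of _ \<theta>1]) (simp add: mgu_prop_def)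
    qed
    have tr: "transformer ar T (map BTy Bs) (BTy Bres)"
      unfolding transformer_def
    proof (intro exI[of _ \<rho>] conjI)
      show "inj_on \<rho> (tvars_t T)" by (rule \<rho>(1))
      show "\<rho> ` tvars_t T \<inter> (\<Union>X\<in>set (map BTy Bs). tvars_bot X) = {}"
        using \<rho>(2) by (auto simp: V_def)
      show "let T' = subst_t (TVar \<circ> \<rho>) T; ps = zip (map BTy Bs) (map BTy (args_of T'))
         in length (map BTy Bs) = length (args_of T') \<and>
            (if \<exists>\<sigma>. unifier ar \<sigma> ps then \<exists>\<sigma>. is_mgu ar \<sigma> ps \<and> BTy Bres = BTy (subst_b \<sigma> (res_of T'))
             else BTy Bres = BBot)"
        unfolding Let_def T'_def[symmetric] ps_def[symmetric]
        using len unifps mgups by (auto simp: Bres_def)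
    qed
    have inf_app: "infer ar \<Lambda> \<Gamma> (App c es) (BTy Bres)"
      by (rule infer_app[OF decl_app.hyps(1) r(1) tr])
    have vq: "vars_ps (zip Bs (args_of T')) \<subseteq> (\<Union>B\<in>set Bs. tvars_b B) \<union> tvars_t T'"
      using len tvars_t_args_res[of T'] by (auto simp: vars_zip)
    have "tvars_b Bres \<subseteq> (\<Union>B\<in>set Bs. tvars_b B) \<union> tvars_t T'"
    proof
      fix x assume "x \<in> tvars_b Bres"
      then obtain u where u: "u \<in> tvars_b (res_of T')" "x \<in> tvars_b (\<sigma>s u)"
        by (auto simp: Bres_def tvars_subst_b)
      then have "x \<in> vars_ps (zip Bs (args_of T')) \<union> {u}" using m by (auto simp: mgu_prop_def)
      then show "x \<in> (\<Union>B\<in>set Bs. tvars_b B) \<union> tvars_t T'"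
        using vq u(1) tvars_res_sub[of T'] by auto
    qed
    then have "tvars_b Bres \<inter> F = {}" using r(2) \<rho>(2) tT' by (auto simp: V_def)
    moreover have "res_of T0 = subst_b \<theta>'' Bres"
    proof -
      have "res_of T0 = subst_b \<theta>'' (res_of T')" using sT' by (metis res_subst)
      also have "\<dots> = subst_b \<theta>'' Bres" by (simp add: Bres_def subst_b_comp fix'')
      finally show ?thesis .
    qed
    ultimately show "\<exists>B \<theta>. infer ar \<Lambda> \<Gamma> (App c es) (BTy B) \<and> tvars_b B \<inter> F = {} \<and>
      wf_subst ar \<theta> \<and> res_of T0 = subst_b \<theta> B"
      using inf_app w'' by (intro exI[of _ Bres] exI[of _ \<theta>'']) simp
  qed
qed



lemma compl_n:
  assumes inf: "infinite (UNIV :: 'v set)"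
  shows "decl_n ar \<Lambda> \<Gamma> E t \<Longrightarrow> gr_env (\<Gamma> :: ('x,'c,'v) env) \<Longrightarrow> ground_t t \<Longrightarrow> check ar \<Lambda> \<Gamma> E t"
proof (induction rule: decl_n.induct)
  case (decl_atm \<Gamma> e b)
  have gb: "ground_b b" using decl_atm.prems(2) by (simp add: ground_t_def ground_b_def)
  have "CP ar \<Lambda> \<Gamma> e b" using compl_a[OF inf decl_atm.hyps decl_atm.prems(1)] .
  then have "\<exists>B \<theta>. infer ar \<Lambda> \<Gamma> e (BTy B) \<and> tvars_b B \<inter> {} = {} \<and> wf_subst ar \<theta> \<and> b = subst_b \<theta> B"
    unfolding CP_def by (erule_tac x="{}" in allE) simp
  then obtain B \<theta> where h: "infer ar \<Lambda> \<Gamma> e (BTy B)" "wf_subst ar \<theta>" "b = subst_b \<theta> B" by auto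
  have "inst_le ar (BTy b) (BTy B)" unfolding inst_le_def using h(2,3) by auto
  then show ?case by (rule check_atm[OF gb h(1)])
next
  case (decl_fun b \<Gamma> x E t)
  have "gr_env (\<Gamma>(x \<mapsto> b))" using decl_fun.prems(1) decl_fun.hyps(1) by (auto simp: gr_env_def)
  moreover have "ground_t t" using decl_fun.prems(2) by (simp add: ground_t_def)
  ultimately have "check ar \<Lambda> (\<Gamma>(x \<mapsto> b)) E t" using decl_fun.IH by blast
  then show ?case by (rule check_fun[OF decl_fun.hyps(1)])
qed

definition SP where
  "SP ar \<Lambda> \<Gamma> e R \<longleftrightarrow> (\<forall>\<sigma> b. wf_subst ar \<sigma> \<longrightarrow> ground_b b \<longrightarrow> subst_bot \<sigma> R = BTy b \<longrightarrow> decl_a ar \<Lambda> \<Gamma> e b)"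

lemma ground_const: "ground_b b \<Longrightarrow> ground_b (subst_b (\<lambda>_. b) X)"
  by (rule ground_subst_b)

lemma sound_a:
  fixes \<Lambda> :: "('n, 'c, 'v) library"
  assumes wfL: "\<forall>c T. \<Lambda> c = Some T \<longrightarrow> wf_t ar T"
  shows "infer ar \<Lambda> \<Gamma> e R \<Longrightarrow> gr_env \<Gamma> \<Longrightarrow> SP ar \<Lambda> \<Gamma> e R"
proof (induction rule: infer.induct)
  case (infer_var \<Gamma> x b)
  show ?case unfolding SP_def
  proof (intro allI impI)
    fix \<sigma> b' assume "wf_subst ar \<sigma>" "ground_b b'" "subst_bot \<sigma> (BTy b) = BTy b'"
    moreover have "ground_b b" using infer_var by (auto simp: gr_env_def)
    ultimately have "b' = b" by (simp add: ground_subst_id)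
    then show "decl_a ar \<Lambda> \<Gamma> (Var x) b'" using infer_var(1) by (simp add: decl_var)
  qed
next
  case (infer_app c T \<Gamma> es Rs R)
  show ?case unfolding SP_def
  proof (intro allI impI)
    fix \<sigma> b assume w\<sigma>: "wf_subst ar \<sigma>" and gb: "ground_b b" and sR: "subst_bot \<sigma> R = BTy b"
    have IH: "list_all2 (SP ar \<Lambda> \<Gamma>) es Rs"
      using infer_app.IH infer_app.prems by (simp add: list_all2_conv_all_nth)
    obtain \<rho> :: "'v \<Rightarrow> 'v" where tr: "let T' = subst_t (TVar \<circ> \<rho>) T;
             ps = zip Rs (map BTy (args_of T'))
         in length Rs = length (args_of T') \<and>
            (if (\<exists>\<sigma>. unifier ar \<sigma> ps)
             then (\<exists>\<sigma>. is_mgu ar \<sigma> ps \<and> R = BTy (subst_b \<sigma> (res_of T')))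
             else R = BBot)"
      using infer_app.hyps(2) unfolding transformer_def by blast
    define T' where "T' = subst_t (TVar \<circ> \<rho>) T"
    define ps where "ps = zip Rs (map BTy (args_of T'))"
    have len: "length Rs = length (args_of T')" using tr by (simp add: Let_def T'_def ps_def)
    have "R \<noteq> BBot" using sR by auto
    then have "\<exists>\<sigma>. unifier ar \<sigma> ps" using tr by (auto simp: Let_def T'_def ps_def split: if_splits)
    then obtain \<sigma>s where m: "is_mgu ar \<sigma>s ps" and R: "R = BTy (subst_b \<sigma>s (res_of T'))"
      using tr by (auto simp: Let_def T'_def ps_def)
    have ws: "wf_subst ar \<sigma>s" and us: "\<forall>(X, Y)\<in>set ps. subst_bot \<sigma>s X = subst_bot \<sigma>s Y"
      using m by (auto simp: is_mgu_def unifier_def)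
    have wT: "wf_t ar T" using wfL infer_app.hyps(1) by blast
    have wT': "wf_t ar T'" unfolding T'_def by (rule wf_subst_t[OF _ wT]) (simp add: wf_subst_def)
    have bdef: "b = subst_b \<sigma> (subst_b \<sigma>s (res_of T'))" using sR R by simp
    have wb: "wf_b ar b" unfolding bdef
      by (intro wf_subst_b[OF w\<sigma>] wf_subst_b[OF ws] wf_res[OF wT'])
    define \<Phi> where "\<Phi> = (\<lambda>w. subst_b (\<lambda>_. b) (subst_b \<sigma> (\<sigma>s w)))"
    have \<Phi>eq: "subst_b \<Phi> X = subst_b (\<lambda>_. b) (subst_b \<sigma> (subst_b \<sigma>s X))" for X
      by (simp add: \<Phi>_def subst_b_comp)
    have w\<Phi>: "wf_subst ar \<Phi>"
      unfolding wf_subst_def \<Phi>_def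
    proof
      fix w show "wf_b ar (subst_b (\<lambda>_. b) (subst_b \<sigma> (\<sigma>s w)))"
        using wb w\<sigma> ws by (intro wf_subst_b) (auto simp: wf_subst_def intro: wf_subst_b)
    qed
    have g\<Phi>: "ground_b (\<Phi> w)" for w unfolding \<Phi>_def by (rule ground_subst_b) (rule gb)
    define \<tau> where "\<tau> = (\<lambda>u. \<Phi> (\<rho> u))"
    have sT: "subst_t \<tau> T = subst_t \<Phi> T'" by (simp add: T'_def subst_t_comp \<tau>_def)
    have w\<tau>: "wf_subst ar \<tau>" using w\<Phi> by (simp add: wf_subst_def \<tau>_def)
    have g\<tau>: "ground_t (subst_t \<tau> T)" by (rule ground_subst_t) (simp add: \<tau>_def g\<Phi>)
    have res: "res_of (subst_t \<tau> T) = b"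
    proof -
      have "res_of (subst_t \<tau> T) = subst_b (\<lambda>_. b) b" by (simp add: sT \<Phi>eq bdef)
      also have "\<dots> = b" by (rule ground_subst_id[OF gb])
      finally show ?thesis .
    qed
    have args: "list_all2 (decl_a ar \<Lambda> \<Gamma>) es (args_of (subst_t \<tau> T))"
      unfolding sT args_subst list_all2_conv_all_nth
    proof (intro conjI allI impI)
      show "length es = length (map (subst_b \<Phi>) (args_of T'))"
        using IH len by (simp add: list_all2_conv_all_nth)
      fix i assume i: "i < length es"
      have iR: "i < length Rs" using IH i by (simp add: list_all2_conv_all_nth)
      have sp: "SP ar \<Lambda> \<Gamma> (es ! i) (Rs ! i)" using IH i by (simp add: list_all2_conv_all_nth)
      have z1: "zip Rs (map BTy (args_of T')) ! i = (Rs ! i, BTy (args_of T' ! i))" using iR len by simp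
      have z2: "i < length (zip Rs (map BTy (args_of T')))" using iR len by simp
      have "(Rs ! i, BTy (args_of T' ! i)) \<in> set ps"
        unfolding ps_def using nth_mem[OF z2] z1 by simp
      then have eq: "subst_bot \<sigma>s (Rs ! i) = BTy (subst_b \<sigma>s (args_of T' ! i))" using us by auto
      then obtain Bi where Bi: "Rs ! i = BTy Bi" by (cases "Rs ! i") auto
      have eq2: "subst_b \<sigma>s Bi = subst_b \<sigma>s (args_of T' ! i)" using eq Bi by simp
      have "subst_bot \<Phi> (Rs ! i) = BTy (subst_b \<Phi> (args_of T' ! i))"
        using Bi eq2 by (simp add: \<Phi>eq)
      moreover have "ground_b (subst_b \<Phi> (args_of T' ! i))" by (rule ground_subst_b) (rule g\<Phi>)
      ultimately have "decl_a ar \<Lambda> \<Gamma> (es ! i) (subst_b \<Phi> (args_of T' ! i))"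
        using sp w\<Phi> unfolding SP_def by blast
      then show "decl_a ar \<Lambda> \<Gamma> (es ! i) (map (subst_b \<Phi>) (args_of T') ! i)"
        using iR len by simp
    qed
    have "decl_a ar \<Lambda> \<Gamma> (App c es) (res_of (subst_t \<tau> T))"
      by (rule decl_app[OF infer_app.hyps(1) w\<tau> g\<tau> refl args])
    then show "decl_a ar \<Lambda> \<Gamma> (App c es) b" using res by simp
  qed
qed

lemma sound_n:
  assumes wfL: "\<forall>c T. \<Lambda> c = Some T \<longrightarrow> wf_t ar T"
  shows "check ar \<Lambda> \<Gamma> E t \<Longrightarrow> gr_env \<Gamma> \<Longrightarrow> decl_n ar \<Lambda> \<Gamma> E t"
proof (induction rule: check.induct)
  case (check_fun b \<Gamma> x E t)
  have "gr_env (\<Gamma>(x \<mapsto> b))" using check_fun by (auto simp: gr_env_def)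
  then have "decl_n ar \<Lambda> (\<Gamma>(x \<mapsto> b)) E t" using check_fun.IH by (simp add: fun_upd_def)
  then show ?case by (rule decl_fun[OF check_fun.hyps(1)])
next
  case (check_atm b \<Gamma> e B)
  obtain \<sigma> where s: "wf_subst ar \<sigma>" "BTy b = subst_bot \<sigma> B"
    using check_atm.hyps(3) unfolding inst_le_def by auto
  have "SP ar \<Lambda> \<Gamma> e B" by (rule sound_a[OF wfL check_atm.hyps(2) check_atm.prems])
  then have "decl_a ar \<Lambda> \<Gamma> e b" using s check_atm.hyps(1) unfolding SP_def by metis
  then show ?case by (rule decl_atm)
qed

theorem mainTheorem5:
  fixes ar :: "'c \<Rightarrow> nat"
    and \<Lambda> :: "('n, 'c, 'v) library"
    and E :: "('n, 'x) nterm"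
    and t :: "('c, 'v) ty"
  assumes "infinite (UNIV :: 'v set)"
    and "finite (dom \<Lambda>)"
    and "\<forall>c T. \<Lambda> c = Some T \<longrightarrow> wf_t ar T"
    and "wf_t ar t" and "ground_t t"
  shows "decl_n ar \<Lambda> Map.empty E t \<longleftrightarrow> check ar \<Lambda> Map.empty E t"
proof
  have g: "gr_env (Map.empty :: ('x,'c,'v) env)" by (simp add: gr_env_def)
  show "decl_n ar \<Lambda> Map.empty E t \<Longrightarrow> check ar \<Lambda> Map.empty E t"
    using compl_n[OF assms(1) _ g assms(5)] by blast
  show "check ar \<Lambda> Map.empty E t \<Longrightarrow> decl_n ar \<Lambda> Map.empty E t"
    using sound_n[OF assms(3) _ g] by blast
qed


end
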